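(* For each positive integer $n$, let $I_n$ be the instance of online stochastic matching with timeouts with $n$ items, $m=n$ customer types, $T=n$ time-steps, $q_j=1/n$, $\ell_j=n$ for all $j$, and $p_{ij}=1/n$, $r_{ij}=1$ for all $i,j$. Let $\mathsf{OPT}_n$ be the optimal value of the LP for $I_n$ and let $A_n$ be the supremum, over all policies, of the expected revenue on $I_n$. Then $\limsup_{n\to\infty} A_n/\mathsf{OPT}_n\le 1-\ln(2-1/e)$. Consequently, for every $\epsilon>0$ there is an instance (satisfying both $\sum_i p_{ij}\le 1$ and $\ell_j\ge n$ for every $j$) on which no policy obtains expected revenue larger than $(1-\ln(2-1/e)+\epsilon)\cdot\mathsf{OPT}$.
   Context: Online stochastic matching with timeouts. There are $n$ items, each with a single unit of inventory, $m$ customer types, and $T$ discrete time-steps. In each time-step $t=1,\dots,T$, independently of everything else, a customer of type $j$ arrives with probability $q_j\ge 0$ (where $\sum_{j}q_j\le 1$). Each type $j$ has a patience level $\ell_j\in\mathbb{Z}_{>0}$. When a customer of type $j$ arrives, the platform may offer her items one at a time; it may only offer items still in inventory and never offers the same item twice to the same customer. Each time item $i$ is offered, she purchases it with probability $p_{ij}\in[0,1]$, independently of everything else; then the platform earns $r_{ij}\ge 0$, item $i$ is sold out, and the customer leaves. The customer leaves after $\ell_j$ offers without a purchase. A customer is completely processed before the next time-step. A policy decides (possibly randomly) what to offer. The LP is: maximize $\sum_{j=1}^m Tq_j\sum_{i=1}^n r_{ij}p_{ij}x_{ij}$ subject to $\sum_{j=1}^m Tq_jp_{ij}x_{ij}\le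 1$ for all $i$; $\sum_{i=1}^n p_{ij}x_{ij}\le 1$ for all $j$; $\sum_{i=1}^n x_{ij}\le \ell_j$ for all $j$; $0\le x_{ij}\le 1$ for all $i,j$. *)

theory Defs
  imports "HOL-Probability.Probability"
begin

text \<open>Items are 0..<n, customer types 0..<m.
  A history is the list of all events so far: an arrival at a time step (Some j = customer
  of type j, None = nobody arrives), or an offer of item i with its outcome (True = purchase).\<close>

datatype event = Arrive "nat option" | Offer nat bool

text \<open>A (possibly randomized, history-dependent) policy: given the history, while a customer
  is being processed, it draws either None (stop offering) or Some i (offer item i).\<close>
type_synonym policy = "event list \<Rightarrow> nat option pmf"

definition is_arrive :: "event \<Rightarrow> bool" where
  "is_arrive e = (case e of Arrive _ \<Rightarrow> True | Offer _ _ \<Rightarrow> False)"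

definition sold_items :: "event list \<Rightarrow> nat set" where
  "sold_items h = {i. Offer i True \<in> set h}"

definition current_offers :: "event list \<Rightarrow> nat set" where
  "current_offers h = {i. \<exists>b. Offer i b \<in> set (takeWhile (\<lambda>e. \<not> is_arrive e) (rev h))}"

definition valid_policy :: "nat \<Rightarrow> policy \<Rightarrow> bool" where
  "valid_policy n \<pi> \<longleftrightarrow> (\<forall>h a. a \<in> set_pmf (\<pi> h) \<longrightarrow>
      (case a of None \<Rightarrow> True
       | Some i \<Rightarrow> i < n \<and> i \<notin> sold_items h \<and> i \<notin> current_offers h))"

text \<open>Expected revenue from the processing of a customer of type j who has k offers left
  (patience), given the history h; after is the expected revenue of the remaining time steps
  as a function of the history at the end of this customer's processing.\<close>
primrec serve :: "(event list \<Rightarrow> real) \<Rightarrow> policy \<Rightarrow> (nat \<Rightarrow> nat \<Rightarrow> real) \<Rightarrow>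
    (nat \<Rightarrow> nat \<Rightarrow> real) \<Rightarrow> nat \<Rightarrow> nat \<Rightarrow> event list \<Rightarrow> real" where
  "serve after \<pi> p r j 0 h = after h"
| "serve after \<pi> p r j (Suc k) h =
     measure_pmf.expectation (\<pi> h) (\<lambda>a. case a of
        None \<Rightarrow> after h
      | Some i \<Rightarrow> p i j * (r i j + after (h @ [Offer i True]))
                 + (1 - p i j) * serve after \<pi> p r j k (h @ [Offer i False]))"

primrec rev_from :: "nat \<Rightarrow> nat \<Rightarrow> (nat \<Rightarrow> real) \<Rightarrow> (nat \<Rightarrow> nat) \<Rightarrow> (nat \<Rightarrow> nat \<Rightarrow> real) \<Rightarrow>
    (nat \<Rightarrow> nat \<Rightarrow> real) \<Rightarrow> policy \<Rightarrow> event list \<Rightarrow> real" where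
  "rev_from m 0 q l p r \<pi> h = 0"
| "rev_from m (Suc t) q l p r \<pi> h =
     (\<Sum>j<m. q j * serve (rev_from m t q l p r \<pi>) \<pi> p r j (l j) (h @ [Arrive (Some j)]))
     + (1 - (\<Sum>j<m. q j)) * rev_from m t q l p r \<pi> (h @ [Arrive None])"

definition expected_revenue :: "nat \<Rightarrow> nat \<Rightarrow> nat \<Rightarrow> (nat \<Rightarrow> real) \<Rightarrow> (nat \<Rightarrow> nat) \<Rightarrow>
    (nat \<Rightarrow> nat \<Rightarrow> real) \<Rightarrow> (nat \<Rightarrow> nat \<Rightarrow> real) \<Rightarrow> policy \<Rightarrow> real" where
  "expected_revenue n m T q l p r \<pi> = rev_from m T q l p r \<pi> []"

definition best_revenue :: "nat \<Rightarrow> nat \<Rightarrow> nat \<Rightarrow> (nat \<Rightarrow> real) \<Rightarrow> (nat \<Rightarrow> nat) \<Rightarrow>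
    (nat \<Rightarrow> nat \<Rightarrow> real) \<Rightarrow> (nat \<Rightarrow> nat \<Rightarrow> real) \<Rightarrow> real" where
  "best_revenue n m T q l p r = Sup {expected_revenue n m T q l p r \<pi> | \<pi>. valid_policy n \<pi>}"

definition lp_feasible :: "nat \<Rightarrow> nat \<Rightarrow> nat \<Rightarrow> (nat \<Rightarrow> real) \<Rightarrow> (nat \<Rightarrow> nat) \<Rightarrow>
    (nat \<Rightarrow> nat \<Rightarrow> real) \<Rightarrow> (nat \<Rightarrow> nat \<Rightarrow> real) \<Rightarrow> bool" where
  "lp_feasible n m T q l p x \<longleftrightarrow>
     (\<forall>i<n. (\<Sum>j<m. real T * q j * p i j * x i j) \<le> 1) \<and>
     (\<forall>j<m. (\<Sum>i<n. p i j * x i j) \<le> 1) \<and>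
     (\<forall>j<m. (\<Sum>i<n. x i j) \<le> real (l j)) \<and>
     (\<forall>i<n. \<forall>j<m. 0 \<le> x i j \<and> x i j \<le> 1)"

definition lp_objective :: "nat \<Rightarrow> nat \<Rightarrow> nat \<Rightarrow> (nat \<Rightarrow> real) \<Rightarrow>
    (nat \<Rightarrow> nat \<Rightarrow> real) \<Rightarrow> (nat \<Rightarrow> nat \<Rightarrow> real) \<Rightarrow> (nat \<Rightarrow> nat \<Rightarrow> real) \<Rightarrow> real" where
  "lp_objective n m T q p r x = (\<Sum>j<m. real T * q j * (\<Sum>i<n. r i j * p i j * x i j))"

definition lp_opt :: "nat \<Rightarrow> nat \<Rightarrow> nat \<Rightarrow> (nat \<Rightarrow> real) \<Rightarrow> (nat \<Rightarrow> nat) \<Rightarrow>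
    (nat \<Rightarrow> nat \<Rightarrow> real) \<Rightarrow> (nat \<Rightarrow> nat \<Rightarrow> real) \<Rightarrow> real" where
  "lp_opt n m T q l p r = Sup {lp_objective n m T q p r x | x. lp_feasible n m T q l p x}"

definition instance_ok :: "nat \<Rightarrow> nat \<Rightarrow> nat \<Rightarrow> (nat \<Rightarrow> real) \<Rightarrow> (nat \<Rightarrow> nat) \<Rightarrow>
    (nat \<Rightarrow> nat \<Rightarrow> real) \<Rightarrow> (nat \<Rightarrow> nat \<Rightarrow> real) \<Rightarrow> bool" where
  "instance_ok n m T q l p r \<longleftrightarrow>
     (\<forall>j<m. 0 \<le> q j) \<and> (\<Sum>j<m. q j) \<le> 1 \<and> (\<forall>j<m. 0 < l j) \<and>
     (\<forall>i<n. \<forall>j<m. 0 \<le> p i j \<and> p i j \<le> 1 \<and> 0 \<le> r i j)"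

definition A_n :: "nat \<Rightarrow> real" where
  "A_n n = best_revenue n n n (\<lambda>_. 1 / real n) (\<lambda>_. n) (\<lambda>_ _. 1 / real n) (\<lambda>_ _. 1)"

definition OPT_n :: "nat \<Rightarrow> real" where
  "OPT_n n = lp_opt n n n (\<lambda>_. 1 / real n) (\<lambda>_. n) (\<lambda>_ _. 1 / real n) (\<lambda>_ _. 1)"

end

theory Submission imports Defs "HOL-Real_Asymp.Real_Asymp" begin

lemma key_ineq:
  fixes y K w :: real assumes y: "y > 0" and K: "K > 0"
  shows "(1 - exp (-w)) * (K + y) \<le> K - y * ln (1 + K / y) + y * w"
proof -
  define u where "u = (K + y) * exp (-w) / y"
  have u: "u > 0" using y K by (simp add: u_def)
  have "ln u \<le> u - 1" using u by (rule ln_le_minus_one)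
  moreover have "ln u = ln (K + y) - w - ln y" using y K
    by (simp add: u_def ln_div ln_mult)
  moreover have "ln (1 + K / y) = ln (K + y) - ln y" using y K
    by (simp add: ln_div field_simps)
  ultimately have "ln (1 + K / y) - w \<le> u - 1" by simp
  hence "y * (ln (1 + K / y) - w) \<le> y * (u - 1)" using y by (intro mult_left_mono) auto
  hence "y * (ln (1 + K / y)) - y * w \<le> y * u - y" by (simp add: algebra_simps)
  moreover have "y * u = (K + y) * exp (-w)" using y by (simp add: u_def)
  ultimately show ?thesis by (simp add: algebra_simps)
qed

lemma log_sum:
  fixes x z K :: real assumes x: "x > 0" and z: "z > 0" and K: "K > 0"
  shows "(z + K) * ln ((z + K) / (x + K)) \<le> z * ln (z / x)"
proof -
  have 1: "ln (x * (z + K) / (z * (x + K))) \<le> x * (z + K) / (z * (x + K)) - 1"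
    using x z K by (intro ln_le_minus_one) simp
  have 2: "ln ((z + K) / (x + K)) \<le> (z + K) / (x + K) - 1"
    using x z K by (intro ln_le_minus_one) simp
  have "z * ln (x * (z + K) / (z * (x + K))) + K * ln ((z + K) / (x + K))
      \<le> z * (x * (z + K) / (z * (x + K)) - 1) + K * ((z + K) / (x + K) - 1)"
    using 1 2 z K by (intro add_mono mult_left_mono) auto
  also have "\<dots> = 0"
  proof -
    have a: "z * (x * (z + K) / (z * (x + K)) - 1) = x * (z + K) / (x + K) - z"
      using z by (simp add: right_diff_distrib)
    have b: "x * (z + K) / (x + K) + K * ((z + K) / (x + K)) = z + K"
    proof -
      have "x * (z + K) / (x + K) + K * ((z + K) / (x + K)) = (x + K) * (z + K) / (x + K)"
        by (simp add: add_divide_distrib algebra_simps)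
      also have "\<dots> = z + K" using x K by simp
      finally show ?thesis .
    qed
    show ?thesis unfolding a using b by (simp add: algebra_simps)
  qed
  finally have 3: "z * ln (x * (z + K) / (z * (x + K))) + K * ln ((z + K) / (x + K)) \<le> 0" .
  have "ln (x * (z + K) / (z * (x + K))) = ln ((z + K) / (x + K)) - ln (z / x)"
    using x z K by (simp add: ln_div ln_mult)
  then have "z * (ln ((z + K) / (x + K)) - ln (z / x)) + K * ln ((z + K) / (x + K)) \<le> 0"
    using 3 by (simp only:)
  then show ?thesis by (simp only: ring_distribs)
qed

definition Phi :: "real \<Rightarrow> real \<Rightarrow> real" where
  "Phi K v = (v + K) * ln (v + K) - v * ln v"

lemma Phi_tangent:
  fixes x z K :: real assumes x: "x > 0" and z: "z > 0" and K: "K > 0"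
  shows "Phi K z - Phi K x \<le> (z - x) * ln (1 + K / x)"
proof -
  have e1: "ln (1 + K / x) = ln (x + K) - ln x" using x K by (simp add: ln_div field_simps)
  have e2: "ln ((z + K) / (x + K)) = ln (z + K) - ln (x + K)" using x z K by (simp add: ln_div)
  have e3: "ln (z / x) = ln z - ln x" using x z by (simp add: ln_div)
  have L: "(z + K) * (ln (z + K) - ln (x + K)) \<le> z * (ln z - ln x)"
    using log_sum[OF x z K] unfolding e2 e3 .
  show ?thesis using L by (simp add: Phi_def e1 algebra_simps)
qed

definition Kc :: real where "Kc = 1 - exp (-1)"
definition lam :: "nat \<Rightarrow> real" where "lam n = - ln (1 - 1 / real n)"
definition rho :: "nat \<Rightarrow> real" where "rho n = 1 - lam n"
definition pp :: "nat \<Rightarrow> nat \<Rightarrow> real" where "pp n t = (Kc + rho n ^ t) / (Kc + 1)"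
definition aa :: "nat \<Rightarrow> nat \<Rightarrow> real" where
  "aa n t = (\<Sum>k<t. Kc - rho n ^ k * ln (1 + Kc / rho n ^ k)) / (Kc + 1)"
definition UU :: "nat \<Rightarrow> nat \<Rightarrow> nat \<Rightarrow> real" where
  "UU n t s = aa n t + (1 - pp n t) * real s"

lemma Kc_pos: "Kc > 0" by (simp add: Kc_def)

lemma exp_m1_less: "exp (-1::real) < 1/2"
proof -
  have "exp (1::real) > (1 + 1/1) powr 1" by (rule exp_1_gt_powr) simp
  hence "exp (1::real) > 2" by simp
  thus ?thesis by (simp add: exp_minus field_simps)
qed

lemma lam_bounds: assumes "n \<ge> 2" shows "0 < lam n" "lam n < 1"
proof -
  have n: "real n \<ge> 2" using assms by simp
  have g: "0 < 1 - 1 / real n" "1 - 1 / real n < 1" using n by (auto simp: field_simps)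
  show "0 < lam n" unfolding lam_def using g by simp
  have "1/2 \<le> 1 - 1 / real n" using n by (simp add: field_simps)
  hence "exp (-1) < 1 - 1 / real n" using exp_m1_less by linarith
  hence "ln (exp (-1)) < ln (1 - 1 / real n)" using g by (subst ln_less_cancel_iff) auto
  hence "-1 < ln (1 - 1 / real n)" by simp
  thus "lam n < 1" unfolding lam_def by simp
qed

lemma rho_pos: "n \<ge> 2 \<Longrightarrow> rho n > 0" using lam_bounds[of n] by (simp add: rho_def)

lemma gamma_pow: assumes "n \<ge> 2" shows "(1 - 1 / real n) ^ s = exp (- (lam n * real s))"
proof -
  have g: "0 < 1 - 1 / real n" using assms by (simp add: field_simps)
  have "exp (- (lam n * real s)) = exp (real s * ln (1 - 1 / real n))" by (simp add: lam_def)
  also have "\<dots> = exp (ln (1 - 1 / real n)) ^ s" by (rule exp_of_nat_mult)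
  also have "\<dots> = (1 - 1 / real n) ^ s" using g by simp
  finally show ?thesis by simp
qed

lemma bellman:
  assumes n: "n \<ge> 2"
  shows "UU n t s + pp n t * (1 - (1 - 1 / real n) ^ s) \<le> UU n (Suc t) s"
proof -
  define y where "y = rho n ^ t"
  define w where "w = lam n * real s"
  have y: "y > 0" using rho_pos[OF n] by (simp add: y_def)
  have key: "(1 - exp (-w)) * (Kc + y) \<le> Kc - y * ln (1 + Kc / y) + y * w"
    by (rule key_ineq[OF y Kc_pos])
  have K1: "Kc + 1 > 0" using Kc_pos by simp
  have e1: "aa n (Suc t) = aa n t + (Kc - y * ln (1 + Kc / y)) / (Kc + 1)"
    by (simp add: aa_def y_def add_divide_distrib)
  have e2: "pp n (Suc t) = pp n t - y * lam n / (Kc + 1)"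
    by (simp add: pp_def y_def rho_def diff_divide_distrib algebra_simps)
  have e3: "pp n t = (Kc + y) / (Kc + 1)" by (simp add: pp_def y_def)
  have "pp n t * (1 - (1 - 1 / real n) ^ s) = (1 - exp (-w)) * (Kc + y) / (Kc + 1)"
    unfolding gamma_pow[OF n] e3 w_def by simp
  also have "\<dots> \<le> (Kc - y * ln (1 + Kc / y) + y * w) / (Kc + 1)"
    using key K1 by (simp add: divide_right_mono)
  also have "\<dots> = (Kc - y * ln (1 + Kc / y)) / (Kc + 1) + y * w / (Kc + 1)"
    by (rule add_divide_distrib)
  finally have "pp n t * (1 - (1 - 1 / real n) ^ s) \<le> (Kc - y * ln (1 + Kc / y)) / (Kc + 1) + y * w / (Kc + 1)" .
  thus ?thesis unfolding UU_def e1 e2 w_def by (simp add: add_divide_distrib algebra_simps)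
qed

lemma S_bound:
  assumes n: "n \<ge> 2"
  shows "(\<Sum>k<Suc m. rho n ^ k * ln (1 + Kc / rho n ^ k))
          \<ge> (rho n / lam n) * (Phi Kc 1 - Phi Kc (rho n ^ m))"
proof (induction m)
  case 0
  have "ln (1 + Kc) \<ge> 0" using Kc_pos by simp
  thus ?case by simp
next
  case (Suc m)
  define x where "x = rho n ^ Suc m"
  define z where "z = rho n ^ m"
  have r: "rho n > 0" and l: "lam n > 0" using rho_pos[OF n] lam_bounds[OF n] by auto
  have x: "x > 0" and z: "z > 0" using r by (auto simp: x_def z_def)
  have zx: "z - x = rho n ^ m * lam n" by (simp add: x_def z_def rho_def algebra_simps)
  have "Phi Kc z - Phi Kc x \<le> (z - x) * ln (1 + Kc / x)" by (rule Phi_tangent[OF x z Kc_pos])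
  hence "(rho n / lam n) * (Phi Kc z - Phi Kc x) \<le> (rho n / lam n) * ((z - x) * ln (1 + Kc / x))"
    using r l by (intro mult_left_mono) auto
  also have "\<dots> = x * ln (1 + Kc / x)" using l unfolding zx by (simp add: x_def field_simps)
  finally have step: "(rho n / lam n) * (Phi Kc z - Phi Kc x) \<le> x * ln (1 + Kc / x)" .
  have "(rho n / lam n) * (Phi Kc 1 - Phi Kc x)
        = (rho n / lam n) * (Phi Kc 1 - Phi Kc z) + (rho n / lam n) * (Phi Kc z - Phi Kc x)"
    by (simp add: algebra_simps)
  also have "\<dots> \<le> (\<Sum>k<Suc m. rho n ^ k * ln (1 + Kc / rho n ^ k)) + x * ln (1 + Kc / x)"
    using Suc.IH step unfolding z_def by linarith
  also have "\<dots> = (\<Sum>k<Suc (Suc m). rho n ^ k * ln (1 + Kc / rho n ^ k))"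
    by (simp add: x_def)
  finally show ?case by (simp add: x_def)
qed

definition G :: "nat \<Rightarrow> real" where
  "G n = (Kc - (rho n / (real n * lam n)) * (Phi Kc 1 - Phi Kc (rho n ^ (n - 1))) + (1 - rho n ^ n)) / (Kc + 1)"

lemma UU_bound:
  assumes n: "n \<ge> 2"
  shows "UU n n n \<le> real n * G n"
proof -
  obtain m where m: "n = Suc m" using n by (cases n) auto
  have S: "(\<Sum>k<n. rho n ^ k * ln (1 + Kc / rho n ^ k))
          \<ge> (rho n / lam n) * (Phi Kc 1 - Phi Kc (rho n ^ (n - 1)))"
    using S_bound[OF n, of m] m by simp
  have K1: "Kc + 1 > 0" using Kc_pos by simp
  have l: "lam n > 0" using lam_bounds[OF n] by simp
  have "UU n n n = (real n * Kc - (\<Sum>k<n. rho n ^ k * ln (1 + Kc / rho n ^ k))) / (Kc + 1)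
        + (1 - (Kc + rho n ^ n) / (Kc + 1)) * real n"
    by (simp add: UU_def aa_def pp_def sum_subtractf)
  also have "\<dots> \<le> (real n * Kc - (rho n / lam n) * (Phi Kc 1 - Phi Kc (rho n ^ (n - 1)))) / (Kc + 1)
        + (1 - (Kc + rho n ^ n) / (Kc + 1)) * real n"
    using S K1 by (simp add: divide_right_mono)
  also have "\<dots> = real n * G n"
  proof -
    have nn: "real n > 0" using n by simp
    have gen: "(N * K - (r / L) * D) / (K + 1) + (1 - (K + R) / (K + 1)) * N
      = N * ((K - (r / (N * L)) * D + (1 - R)) / (K + 1))"
      if "N > 0" "K + 1 > 0" "L > 0" for N K r L D R :: real
    proof -
      have k: "K + 1 \<noteq> 0" using that by simp
      have e1: "(1 - (K + R) / (K + 1)) * N = (N - N * R) / (K + 1)"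
        using k by (simp add: field_simps)
      have e2: "N * (K - r / (N * L) * D + (1 - R)) = N * K - (r / L) * D + (N - N * R)"
        using that by (simp add: field_simps)
      have "N * ((K - (r / (N * L)) * D + (1 - R)) / (K + 1))
          = (N * (K - r / (N * L) * D + (1 - R))) / (K + 1)" by simp
      also have "\<dots> = (N * K - (r / L) * D) / (K + 1) + (N - N * R) / (K + 1)"
        unfolding e2 by (simp add: add_divide_distrib)
      finally show ?thesis unfolding e1 by simp
    qed
    show ?thesis unfolding G_def by (rule gen[OF nn K1 l])
  qed
  finally show ?thesis .
qed

definition cst :: real where "cst = 1 - ln (2 - exp (-1))"

lemma G_lim: "G \<longlonglongrightarrow> cst"
proof -
  have r: "rho \<longlonglongrightarrow> 1" unfolding rho_def lam_def by real_asymp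
  have nl: "(\<lambda>n. real n * lam n) \<longlonglongrightarrow> 1" unfolding lam_def by real_asymp
  have r1: "(\<lambda>n. rho n ^ (n - 1)) \<longlonglongrightarrow> exp (-1)" unfolding rho_def lam_def by real_asymp
  have r2: "(\<lambda>n. rho n ^ n) \<longlonglongrightarrow> exp (-1)" unfolding rho_def lam_def by real_asymp
  have P: "(\<lambda>n. Phi Kc (rho n ^ (n - 1))) \<longlonglongrightarrow> Phi Kc (exp (-1))"
    unfolding Phi_def using r1
    by (intro tendsto_intros) (auto simp: Kc_def)
  have "G \<longlonglongrightarrow> (Kc - (1 / 1) * (Phi Kc 1 - Phi Kc (exp (-1))) + (1 - exp (-1))) / (Kc + 1)"
    unfolding G_def using r nl P r2 Kc_pos
    by (intro tendsto_intros) auto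
  moreover have "(Kc - (1 / 1) * (Phi Kc 1 - Phi Kc (exp (-1))) + (1 - exp (-1))) / (Kc + 1) = cst"
  proof -
    have a: "Kc + 1 = 2 - exp (-1)" by (simp add: Kc_def)
    have b: "Phi Kc (exp (-1)) = exp (-1)" by (simp add: Phi_def Kc_def)
    have c: "Phi Kc 1 = (2 - exp (-1)) * ln (2 - exp (-1))" by (simp add: Phi_def Kc_def)
    have d: "2 - exp (-1::real) > 0" using exp_m1_less by simp
    show ?thesis unfolding a b c cst_def using d by (simp add: Kc_def field_simps)
  qed
  ultimately show ?thesis by simp
qed

definition rem :: "nat \<Rightarrow> event list \<Rightarrow> nat" where
  "rem n h = card ({..<n} - sold_items h)"
definition avl :: "nat \<Rightarrow> event list \<Rightarrow> nat" where
  "avl n h = card ({..<n} - sold_items h - current_offers h)"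

lemma sold_offer: "sold_items (h @ [Offer i b]) = (if b then insert i (sold_items h) else sold_items h)"
  by (auto simp: sold_items_def)
lemma sold_arrive: "sold_items (h @ [Arrive x]) = sold_items h"
  by (auto simp: sold_items_def)
lemma cur_arrive: "current_offers (h @ [Arrive x]) = {}"
  by (simp add: current_offers_def is_arrive_def)
lemma cur_offer: "current_offers (h @ [Offer i b]) = insert i (current_offers h)"
  by (auto simp: current_offers_def is_arrive_def)

lemma rem_le: "rem n h \<le> n"
proof -
  have "card ({..<n} - sold_items h) \<le> card {..<n}" by (rule card_mono) auto
  thus ?thesis by (simp add: rem_def)
qed

lemma serve_bound:
  assumes v: "valid_policy n \<pi>" and n: "n > 0" and c: "c \<le> 1"
    and aft: "\<And>h. after h \<le> a + c * real (rem n h)"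
  shows "serve after \<pi> (\<lambda>_ _. 1 / real n) (\<lambda>_ _. 1) j k h
         \<le> a + c * real (rem n h) + (1 - c) * (1 - (1 - 1 / real n) ^ (min k (avl n h)))"
proof (induction k arbitrary: h)
  case 0
  show ?case using aft[of h] by simp
next
  case (Suc k)
  define \<gamma> where "\<gamma> = 1 - 1 / real n"
  have g0: "0 \<le> \<gamma>" and g1: "\<gamma> \<le> 1" using n by (auto simp: \<gamma>_def field_simps)
  define M where "M = a + c * real (rem n h) + (1 - c) * (1 - \<gamma> ^ (min (Suc k) (avl n h)))"
  define f where "f = (\<lambda>x. case x of
        None \<Rightarrow> after h
      | Some i \<Rightarrow> 1 / real n * (1 + after (h @ [Offer i True]))
                 + (1 - 1 / real n) * serve after \<pi> (\<lambda>_ _. 1 / real n) (\<lambda>_ _. 1) j k (h @ [Offer i False]))"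
  have bound: "f x \<le> M" if x: "x \<in> set_pmf (\<pi> h)" for x
  proof (cases x)
    case None
    have "0 \<le> (1 - c) * (1 - \<gamma> ^ (min (Suc k) (avl n h)))"
      using c g0 g1 by (intro mult_nonneg_nonneg) (auto simp: power_le_one)
    thus ?thesis using aft[of h] None by (simp add: f_def M_def)
  next
    case (Some i)
    have vi: "i < n" "i \<notin> sold_items h" "i \<notin> current_offers h"
      using v x Some unfolding valid_policy_def by (auto split: option.splits)
    define R0 where "R0 = rem n h"
    define A0 where "A0 = avl n h"
    have fin: "finite ({..<n} - sold_items h)" by simp
    have R0: "R0 \<ge> 1" "rem n (h @ [Offer i True]) = R0 - 1"
    proof -
      have "i \<in> {..<n} - sold_items h" using vi by auto
      hence "card ({..<n} - sold_items h) \<ge> 1" using fin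
        by (metis One_nat_def Suc_leI card_gt_0_iff empty_iff)
      thus "R0 \<ge> 1" by (simp add: R0_def rem_def)
      have "{..<n} - insert i (sold_items h) = ({..<n} - sold_items h) - {i}" by auto
      thus "rem n (h @ [Offer i True]) = R0 - 1"
        using vi by (simp add: rem_def R0_def sold_offer card_Diff_singleton)
    qed
    have R1: "rem n (h @ [Offer i False]) = R0" by (simp add: rem_def R0_def sold_offer)
    have A1: "A0 \<ge> 1" "avl n (h @ [Offer i False]) = A0 - 1"
    proof -
      have fin2: "finite ({..<n} - sold_items h - current_offers h)" by simp
      have "i \<in> {..<n} - sold_items h - current_offers h" using vi by auto
      hence "card ({..<n} - sold_items h - current_offers h) \<ge> 1" using fin2
        by (metis One_nat_def Suc_leI card_gt_0_iff empty_iff)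
      thus "A0 \<ge> 1" by (simp add: A0_def avl_def)
      have "{..<n} - sold_items h - insert i (current_offers h)
            = ({..<n} - sold_items h - current_offers h) - {i}" by auto
      thus "avl n (h @ [Offer i False]) = A0 - 1"
        using vi by (simp add: avl_def A0_def sold_offer cur_offer card_Diff_singleton)
    qed
    define m where "m = min k (A0 - 1)"
    have m: "Suc m = min (Suc k) A0" using A1 by (simp add: m_def)
    have h1: "after (h @ [Offer i True]) \<le> a + c * (real R0 - 1)"
      using aft[of "h @ [Offer i True]"] R0 by (simp add: of_nat_diff)
    have h2: "serve after \<pi> (\<lambda>_ _. 1 / real n) (\<lambda>_ _. 1) j k (h @ [Offer i False])
        \<le> a + c * real R0 + (1 - c) * (1 - \<gamma> ^ m)"
      using Suc.IH[of "h @ [Offer i False]"] R1 A1 by (simp add: m_def \<gamma>_def)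
    have p0: "0 \<le> 1 / real n" and p1: "0 \<le> 1 - 1 / real n" using n by (auto simp: field_simps)
    have "f x \<le> 1 / real n * (1 + (a + c * (real R0 - 1)))
                + (1 - 1 / real n) * (a + c * real R0 + (1 - c) * (1 - \<gamma> ^ m))"
      unfolding f_def Some option.case
    proof (rule add_mono)
      show "1 / real n * (1 + after (h @ [Offer i True])) \<le> 1 / real n * (1 + (a + c * (real R0 - 1)))"
        using h1 p0 by (intro mult_left_mono) auto
      show "(1 - 1 / real n) * serve after \<pi> (\<lambda>_ _. 1 / real n) (\<lambda>_ _. 1) j k (h @ [Offer i False])
          \<le> (1 - 1 / real n) * (a + c * real R0 + (1 - c) * (1 - \<gamma> ^ m))"
        using h2 p1 by (intro mult_left_mono) auto
    qed
    also have "\<dots> = a + c * real R0 + (1 - c) * (1 - \<gamma> ^ Suc m)"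
      using n by (simp add: \<gamma>_def field_simps)
    finally show ?thesis unfolding M_def m R0_def A0_def .
  qed
  have fin: "finite (set_pmf (\<pi> h))"
  proof (rule finite_subset)
    show "set_pmf (\<pi> h) \<subseteq> insert None (Some ` {..<n})"
    proof
      fix x assume x: "x \<in> set_pmf (\<pi> h)"
      show "x \<in> insert None (Some ` {..<n})"
      proof (cases x)
        case (Some i)
        thus ?thesis using v x unfolding valid_policy_def by fastforce
      qed simp
    qed
  qed simp
  have "measure_pmf.expectation (\<pi> h) f \<le> M"
    using fin bound
    by (intro measure_pmf.integral_le_const integrable_measure_pmf_finite)
       (auto simp: AE_measure_pmf_iff)
  thus ?case by (simp add: f_def M_def \<gamma>_def)
qed

lemma pp_nonneg: "n \<ge> 2 \<Longrightarrow> pp n t \<ge> 0"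
  using rho_pos[of n] Kc_pos by (simp add: pp_def)

lemma rev_bound:
  assumes v: "valid_policy n \<pi>" and n: "n \<ge> 2"
  shows "rev_from n t (\<lambda>_. 1 / real n) (\<lambda>_. n) (\<lambda>_ _. 1 / real n) (\<lambda>_ _. 1) \<pi> h
         \<le> UU n t (rem n h)"
proof (induction t arbitrary: h)
  case 0
  show ?case by (simp add: UU_def aa_def pp_def)
next
  case (Suc t)
  have n0: "n > 0" using n by simp
  have sumq: "(\<Sum>j<n. 1 / real n) = 1" using n0 by simp
  define B where "B = UU n (Suc t) (rem n h)"
  have each: "serve (rev_from n t (\<lambda>_. 1 / real n) (\<lambda>_. n) (\<lambda>_ _. 1 / real n) (\<lambda>_ _. 1) \<pi>) \<pi>
        (\<lambda>_ _. 1 / real n) (\<lambda>_ _. 1) j n (h @ [Arrive (Some j)]) \<le> B" for j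
  proof -
    have c: "1 - pp n t \<le> 1" using pp_nonneg[OF n] by simp
    have aft: "rev_from n t (\<lambda>_. 1 / real n) (\<lambda>_. n) (\<lambda>_ _. 1 / real n) (\<lambda>_ _. 1) \<pi> h'
          \<le> aa n t + (1 - pp n t) * real (rem n h')" for h'
      using Suc.IH[of h'] by (simp add: UU_def)
    have r1: "rem n (h @ [Arrive (Some j)]) = rem n h" by (simp add: rem_def sold_arrive)
    have a1: "avl n (h @ [Arrive (Some j)]) = rem n h" by (simp add: avl_def rem_def sold_arrive cur_arrive)
    have mn: "min n (rem n h) = rem n h" using rem_le[of n h] by simp
    have "serve (rev_from n t (\<lambda>_. 1 / real n) (\<lambda>_. n) (\<lambda>_ _. 1 / real n) (\<lambda>_ _. 1) \<pi>) \<pi>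
        (\<lambda>_ _. 1 / real n) (\<lambda>_ _. 1) j n (h @ [Arrive (Some j)])
        \<le> aa n t + (1 - pp n t) * real (rem n h) + (1 - (1 - pp n t)) * (1 - (1 - 1 / real n) ^ rem n h)"
      using serve_bound[OF v n0 c aft, of j n "h @ [Arrive (Some j)]"] r1 a1 mn by simp
    also have "\<dots> = UU n t (rem n h) + pp n t * (1 - (1 - 1 / real n) ^ rem n h)"
      by (simp add: UU_def)
    also have "\<dots> \<le> B" unfolding B_def by (rule bellman[OF n])
    finally show ?thesis .
  qed
  have "rev_from n (Suc t) (\<lambda>_. 1 / real n) (\<lambda>_. n) (\<lambda>_ _. 1 / real n) (\<lambda>_ _. 1) \<pi> h
      = (\<Sum>j<n. 1 / real n * serve (rev_from n t (\<lambda>_. 1 / real n) (\<lambda>_. n) (\<lambda>_ _. 1 / real n) (\<lambda>_ _. 1) \<pi>) \<pi>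
        (\<lambda>_ _. 1 / real n) (\<lambda>_ _. 1) j n (h @ [Arrive (Some j)]))"
    using sumq by simp
  also have "\<dots> \<le> (\<Sum>j<n. 1 / real n * B)"
    using each by (intro sum_mono mult_left_mono) auto
  also have "\<dots> = B" using n0 by simp
  finally show ?case unfolding B_def .
qed

lemma revenue_bound:
  assumes v: "valid_policy n \<pi>" and n: "n \<ge> 2"
  shows "expected_revenue n n n (\<lambda>_. 1 / real n) (\<lambda>_. n) (\<lambda>_ _. 1 / real n) (\<lambda>_ _. 1) \<pi>
         \<le> real n * G n"
proof -
  have "rem n [] = n" by (simp add: rem_def sold_items_def)
  thus ?thesis using rev_bound[OF v n, of n "[]"] UU_bound[OF n]
    by (simp add: expected_revenue_def)
qed

lemma lp_opt_inst:
  assumes n: "n > 0"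
  shows "lp_opt n n n (\<lambda>_. 1 / real n) (\<lambda>_. n) (\<lambda>_ _. 1 / real n) (\<lambda>_ _. 1) = real n"
  unfolding lp_opt_def
proof (rule cSup_eq_maximum)
  have feas: "lp_feasible n n n (\<lambda>_. 1 / real n) (\<lambda>_. n) (\<lambda>_ _. 1 / real n) (\<lambda>_ _. 1)"
    using n by (simp add: lp_feasible_def)
  have obj: "lp_objective n n n (\<lambda>_. 1 / real n) (\<lambda>_ _. 1 / real n) (\<lambda>_ _. 1) (\<lambda>_ _. 1) = real n"
    using n by (simp add: lp_objective_def)
  show "real n \<in> {lp_objective n n n (\<lambda>_. 1 / real n) (\<lambda>_ _. 1 / real n) (\<lambda>_ _. 1) x |x.
          lp_feasible n n n (\<lambda>_. 1 / real n) (\<lambda>_. n) (\<lambda>_ _. 1 / real n) x}"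
    using feas obj by (metis (mono_tags, lifting) mem_Collect_eq)
next
  fix y assume "y \<in> {lp_objective n n n (\<lambda>_. 1 / real n) (\<lambda>_ _. 1 / real n) (\<lambda>_ _. 1) x |x.
          lp_feasible n n n (\<lambda>_. 1 / real n) (\<lambda>_. n) (\<lambda>_ _. 1 / real n) x}"
  then obtain x where y: "y = lp_objective n n n (\<lambda>_. 1 / real n) (\<lambda>_ _. 1 / real n) (\<lambda>_ _. 1) x"
    and f: "lp_feasible n n n (\<lambda>_. 1 / real n) (\<lambda>_. n) (\<lambda>_ _. 1 / real n) x" by blast
  have x1: "x i j \<le> 1" if "i < n" "j < n" for i j using f that by (simp add: lp_feasible_def)
  have "y = (\<Sum>j<n. real n * (1 / real n) * (\<Sum>i<n. 1 * (1 / real n) * x i j))"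
    by (simp add: y lp_objective_def)
  also have "\<dots> \<le> (\<Sum>j<n. real n * (1 / real n) * (\<Sum>i<n. 1 * (1 / real n) * 1))"
    using x1 by (intro sum_mono mult_left_mono) auto
  also have "\<dots> = real n" using n by simp
  finally show "y \<le> real n" .
qed

lemma valid_none: "valid_policy n (\<lambda>_. return_pmf None)"
  by (simp add: valid_policy_def)

lemma A_bound: assumes n: "n \<ge> 2" shows "A_n n \<le> real n * G n"
  unfolding A_n_def best_revenue_def
proof (rule cSup_least)
  show "{expected_revenue n n n (\<lambda>_. 1 / real n) (\<lambda>_. n) (\<lambda>_ _. 1 / real n) (\<lambda>_ _. 1) \<pi> |\<pi>.
          valid_policy n \<pi>} \<noteq> {}" using valid_none by blast
next
  fix y assume "y \<in> {expected_revenue n n n (\<lambda>_. 1 / real n) (\<lambda>_. n) (\<lambda>_ _. 1 / real n) (\<lambda>_ _. 1) \<pi> |\<pi>.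
          valid_policy n \<pi>}"
  then obtain \<pi> where "valid_policy n \<pi>"
    and "y = expected_revenue n n n (\<lambda>_. 1 / real n) (\<lambda>_. n) (\<lambda>_ _. 1 / real n) (\<lambda>_ _. 1) \<pi>" by blast
  thus "y \<le> real n * G n" using revenue_bound[OF _ n] by simp
qed

lemma ratio_bound: assumes n: "n \<ge> 2" shows "A_n n / OPT_n n \<le> G n"
proof -
  have "OPT_n n = real n" using n lp_opt_inst[of n] by (simp add: OPT_n_def)
  moreover have "real n > 0" using n by simp
  ultimately show ?thesis using A_bound[OF n] by (simp add: field_simps mult.commute)
qed

theorem lemma3p3:
  shows "limsup (\<lambda>n. ereal (A_n n / OPT_n n)) \<le> ereal (1 - ln (2 - exp (-1)))
    \<and> (\<forall>\<epsilon>>0. \<exists>n m T q l p r. n > 0 \<and> instance_ok n m T q l p r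
          \<and> (\<forall>j<m. (\<Sum>i<n. p i j) \<le> 1) \<and> (\<forall>j<m. l j \<ge> n)
          \<and> lp_opt n m T q l p r > 0
          \<and> (\<forall>\<pi>. valid_policy n \<pi> \<longrightarrow>
               expected_revenue n m T q l p r \<pi>
                 \<le> (1 - ln (2 - exp (-1)) + \<epsilon>) * lp_opt n m T q l p r))"
proof
  have ev: "eventually (\<lambda>n. ereal (A_n n / OPT_n n) \<le> ereal (G n)) sequentially"
    using eventually_ge_at_top[of 2] by eventually_elim (simp add: ratio_bound)
  have "limsup (\<lambda>n. ereal (A_n n / OPT_n n)) \<le> limsup (\<lambda>n. ereal (G n))"
    by (rule Limsup_mono[OF ev])
  also have "limsup (\<lambda>n. ereal (G n)) = ereal cst"
    by (rule lim_imp_Limsup) (use G_lim in \<open>auto simp: lim_ereal\<close>)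
  finally show "limsup (\<lambda>n. ereal (A_n n / OPT_n n)) \<le> ereal (1 - ln (2 - exp (-1)))"
    by (simp add: cst_def)
next
  show "\<forall>\<epsilon>>0. \<exists>n m T q l p r. n > 0 \<and> instance_ok n m T q l p r
          \<and> (\<forall>j<m. (\<Sum>i<n. p i j) \<le> 1) \<and> (\<forall>j<m. l j \<ge> n)
          \<and> lp_opt n m T q l p r > 0
          \<and> (\<forall>\<pi>. valid_policy n \<pi> \<longrightarrow>
               expected_revenue n m T q l p r \<pi>
                 \<le> (1 - ln (2 - exp (-1)) + \<epsilon>) * lp_opt n m T q l p r)"
  proof (intro allI impI)
    fix \<epsilon> :: real assume e: "\<epsilon> > 0"
    have "eventually (\<lambda>n. G n < cst + \<epsilon>) sequentially"
      using G_lim e by (intro order_tendstoD) auto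
    moreover have "eventually (\<lambda>n. n \<ge> (2::nat)) sequentially" by (rule eventually_ge_at_top)
    ultimately have "eventually (\<lambda>n. G n < cst + \<epsilon> \<and> n \<ge> 2) sequentially"
      by eventually_elim auto
    then obtain N where N: "\<forall>n\<ge>N. G n < cst + \<epsilon> \<and> 2 \<le> n"
      unfolding eventually_sequentially by blast
    hence "G N < cst + \<epsilon> \<and> 2 \<le> N" by simp
    then obtain n where nG: "G n < cst + \<epsilon>" and n: "n \<ge> 2" by blast
    have n0: "n > 0" using n by simp
    have opt: "lp_opt n n n (\<lambda>_. 1 / real n) (\<lambda>_. n) (\<lambda>_ _. 1 / real n) (\<lambda>_ _. 1) = real n"
      by (rule lp_opt_inst[OF n0])
    have W: "n > 0 \<and> instance_ok n n n (\<lambda>_. 1 / real n) (\<lambda>_. n) (\<lambda>_ _. 1 / real n) (\<lambda>_ _. 1)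
          \<and> (\<forall>j<n. (\<Sum>i<n. (\<lambda>_ _. 1 / real n) i j) \<le> 1) \<and> (\<forall>j<n. (\<lambda>_. n) j \<ge> n)
          \<and> lp_opt n n n (\<lambda>_. 1 / real n) (\<lambda>_. n) (\<lambda>_ _. 1 / real n) (\<lambda>_ _. 1) > 0
          \<and> (\<forall>\<pi>. valid_policy n \<pi> \<longrightarrow>
               expected_revenue n n n (\<lambda>_. 1 / real n) (\<lambda>_. n) (\<lambda>_ _. 1 / real n) (\<lambda>_ _. 1) \<pi>
                 \<le> (1 - ln (2 - exp (-1)) + \<epsilon>) * lp_opt n n n (\<lambda>_. 1 / real n) (\<lambda>_. n) (\<lambda>_ _. 1 / real n) (\<lambda>_ _. 1))"
    proof (intro conjI allI impI)
      show "n > 0" by (rule n0)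
      show "instance_ok n n n (\<lambda>_. 1 / real n) (\<lambda>_. n) (\<lambda>_ _. 1 / real n) (\<lambda>_ _. 1)"
        using n0 by (simp add: instance_ok_def)
      show "(\<Sum>i<n. (\<lambda>_ _. 1 / real n) i j) \<le> 1" for j using n0 by simp
      show "(\<lambda>_. n) j \<ge> n" for j by simp
      show "lp_opt n n n (\<lambda>_. 1 / real n) (\<lambda>_. n) (\<lambda>_ _. 1 / real n) (\<lambda>_ _. 1) > 0"
        using opt n0 by simp
      fix \<pi> assume v: "valid_policy n \<pi>"
      have "expected_revenue n n n (\<lambda>_. 1 / real n) (\<lambda>_. n) (\<lambda>_ _. 1 / real n) (\<lambda>_ _. 1) \<pi>
            \<le> real n * G n" by (rule revenue_bound[OF v n])
      also have "\<dots> \<le> real n * (cst + \<epsilon>)" using nG n0 by (intro mult_left_mono) auto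
      finally show "expected_revenue n n n (\<lambda>_. 1 / real n) (\<lambda>_. n) (\<lambda>_ _. 1 / real n) (\<lambda>_ _. 1) \<pi>
                 \<le> (1 - ln (2 - exp (-1)) + \<epsilon>) * lp_opt n n n (\<lambda>_. 1 / real n) (\<lambda>_. n) (\<lambda>_ _. 1 / real n) (\<lambda>_ _. 1)"
        unfolding opt cst_def by (simp add: mult.commute)
    qed
    show "\<exists>n m T q l p r. n > 0 \<and> instance_ok n m T q l p r
          \<and> (\<forall>j<m. (\<Sum>i<n. p i j) \<le> 1) \<and> (\<forall>j<m. l j \<ge> n)
          \<and> lp_opt n m T q l p r > 0
          \<and> (\<forall>\<pi>. valid_policy n \<pi> \<longrightarrow>
               expected_revenue n m T q l p r \<pi>
                 \<le> (1 - ln (2 - exp (-1)) + \<epsilon>) * lp_opt n m T q l p r)"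
      by (rule exI[of _ n], rule exI[of _ n], rule exI[of _ n], rule exI[of _ "\<lambda>_. 1 / real n"],
          rule exI[of _ "\<lambda>_. n"], rule exI[of _ "\<lambda>_ _. 1 / real n"], rule exI[of _ "\<lambda>_ _. 1"], rule W)
  qed
qed

end
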